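(* Let $k=k(n)$ be integers with $1\le k=O(\log n)$ and let $\varphi(n)=o(1/k(n))$. For every $\eta>0$ there is $n_0$ such that for all $n\ge n_0$, every integer $r>(1/2-\varphi(n))n$, every $x\in Q$ and every $X\subseteq Q$ with $\mu(X)\le\mu(Q_r)$, $$\Pr(T(x)\in X)<(1+\eta)\mu(Q_r).$$
   Context: $Q=\{0,1\}^n$ with uniform probability measure $\mu$; for $y\in Q$, $|y|=\sum_i y_i$, and $Q_r=\{y\in Q: |y|\le r\}$. For $x\in Q$, $T(x)$ is the random element of $Q$ obtained by choosing $K$ uniformly from the $k$-subsets of $[n]$, keeping $x_i$ for $i\in K$, and replacing each $x_i$ with $i\notin K$ by an independent uniform bit. *)

theory Defs
  imports "HOL-Probability.Probability" "HOL-Library.Landau_Symbols"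
begin

text \<open>Points of Q = {0,1}^n are represented by their supports, i.e. subsets of {..<n}.
  |y| is card y.\<close>

definition cube :: "nat \<Rightarrow> nat set set" where
  "cube n = Pow {..<n}"

definition mu :: "nat \<Rightarrow> nat set set \<Rightarrow> real" where
  "mu n X = real (card (X \<inter> cube n)) / 2 ^ n"

definition ball_r :: "nat \<Rightarrow> int \<Rightarrow> nat set set" where
  "ball_r n r = {y \<in> cube n. int (card y) \<le> r}"

text \<open>T(x): choose a uniform k-subset K of [n], keep coordinates in K,
  resample the others by independent uniform bits (= uniform subset of the complement).\<close>
definition T :: "nat \<Rightarrow> nat \<Rightarrow> nat set \<Rightarrow> nat set pmf" where
  "T n k x = do {
     K \<leftarrow> pmf_of_set {K. K \<subseteq> {..<n} \<and> card K = k};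
     R \<leftarrow> pmf_of_set (Pow ({..<n} - K));
     return_pmf ((x \<inter> K) \<union> R) }"

end

theory Submission imports Defs "HOL-Real_Asymp.Real_Asymp" begin

definition F :: "nat \<Rightarrow> nat \<Rightarrow> nat" where "F m a = (\<Sum>s\<le>a. m choose s)"

lemma F_Suc: "F m (Suc a) = F m a + (m choose Suc a)"
  by (simp add: F_def)

lemma F_pascal: "F (Suc m) (Suc a) = F m a + F m (Suc a)"
proof (induction a)
  case 0 then show ?case by (simp add: F_def)
next
  case (Suc a)
  have "F (Suc m) (Suc (Suc a)) = F (Suc m) (Suc a) + (Suc m choose Suc (Suc a))" by (rule F_Suc)
  also have "\<dots> = F m a + F m (Suc a) + (m choose Suc a) + (m choose Suc (Suc a))"
    using Suc by simp
  also have "\<dots> = F m (Suc a) + F m (Suc (Suc a))" by (simp add: F_Suc)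
  finally show ?case .
qed

lemma F_mono: "a \<le> b \<Longrightarrow> F m a \<le> F m b"
  unfolding F_def by (intro sum_mono2) auto

lemma F_double: "2 ^ j * F m a \<le> F (m + j) (a + j)"
proof (induction j)
  case 0 then show ?case by simp
next
  case (Suc j)
  have "2 ^ Suc j * F m a = 2 * (2^j * F m a)" by simp
  also have "\<dots> \<le> 2 * F (m+j) (a+j)" using Suc by simp
  also have "\<dots> \<le> F (m+j) (a+j) + F (m+j) (Suc (a+j))" using F_mono[of "a+j" "Suc (a+j)" "m+j"] by simp
  also have "\<dots> = F (m + Suc j) (a + Suc j)" using F_pascal[of "m+j" "a+j"] by simp
  finally show ?case .
qed

lemma F_pos: "1 \<le> F m a"
proof -
  have "m choose 0 \<le> F m a" unfolding F_def by (rule member_le_sum) auto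
  then show ?thesis by simp
qed

lemma card_small_subsets: "finite A \<Longrightarrow> card {S. S \<subseteq> A \<and> card S \<le> r} = F (card A) r"
proof (induction r)
  case 0
  have "{S. S \<subseteq> A \<and> card S \<le> 0} = {{}}" using 0 by (auto dest: finite_subset)
  then show ?case by (simp add: F_def)
next
  case (Suc r)
  have e: "{S. S \<subseteq> A \<and> card S \<le> Suc r} = {S. S \<subseteq> A \<and> card S \<le> r} \<union> {S. S \<subseteq> A \<and> card S = Suc r}"
    by auto
  have "card ({S. S \<subseteq> A \<and> card S \<le> r} \<union> {S. S \<subseteq> A \<and> card S = Suc r})
     = card {S. S \<subseteq> A \<and> card S \<le> r} + card {S. S \<subseteq> A \<and> card S = Suc r}"
    using Suc.prems by (intro card_Un_disjoint) auto
  then show ?case using Suc by (simp add: e n_subsets F_Suc)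
qed

lemma F_add: "F m (a + k) = F m a + (\<Sum>j\<in>{1..k}. m choose (a + j))"
proof (induction k)
  case 0 then show ?case by simp
next
  case (Suc k)
  have "{1..Suc k} = insert (Suc k) {1..k}" by auto
  then show ?case using Suc by (simp add: F_Suc)
qed

lemma ratio_nat: "s0 \<le> s \<Longrightarrow> (m choose Suc s) * (s0 + 1) \<le> (m choose s) * (m - s0)"
proof -
  assume h: "s0 \<le> s"
  have eq: "(m choose Suc s) * Suc s = (m choose s) * (m - s)"
  proof (cases "s < m")
    case True
    then obtain p where p: "m = Suc p" by (cases m) auto
    have "(m choose Suc s) * Suc s = m * (p choose s)" using Suc_times_binomial[of s p] p by (simp add: mult.commute)
    also have "\<dots> = (m choose s) * (m - s)" using binomial_absorb_comp[of m s] p by (simp add: mult.commute)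
    finally show ?thesis .
  next
    case False then show ?thesis by simp
  qed
  have "(m choose Suc s) * (s0 + 1) \<le> (m choose Suc s) * Suc s" using h by simp
  also have "\<dots> = (m choose s) * (m - s)" by (rule eq)
  also have "\<dots> \<le> (m choose s) * (m - s0)" using h by (intro mult_le_mono2) linarith
  finally show ?thesis .
qed

lemma ratio_pow:
  fixes \<rho> :: real
  assumes r1: "\<rho> \<ge> 1" and hr: "\<And>s. s0 \<le> s \<Longrightarrow> real (m choose Suc s) \<le> \<rho> * real (m choose s)"
  shows "s0 \<le> s \<Longrightarrow> real (m choose (s + d)) \<le> \<rho> ^ d * real (m choose s)"
proof (induction d)
  case 0 then show ?case by simp
next
  case (Suc d)
  have "real (m choose (s + Suc d)) \<le> \<rho> * real (m choose (s + d))" using hr[of "s+d"] Suc by simp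
  also have "\<dots> \<le> \<rho> * (\<rho> ^ d * real (m choose s))" using Suc r1 by (intro mult_left_mono) auto
  finally show ?case by simp
qed

lemma sum_rev_le_F: "L \<le> Suc a \<Longrightarrow> (\<Sum>i<L. m choose (a - i)) \<le> F m a"
proof -
  assume L: "L \<le> Suc a"
  have inj: "inj_on (\<lambda>i. a - i) {..<L}" using L by (auto simp: inj_on_def)
  have "(\<Sum>i<L. m choose (a - i)) = (\<Sum>s\<in>(\<lambda>i. a - i) ` {..<L}. m choose s)"
    by (simp add: sum.reindex[OF inj])
  also have "\<dots> \<le> (\<Sum>s\<le>a. m choose s)" by (intro sum_mono2) auto
  finally show ?thesis by (simp add: F_def)
qed

lemma tail:
  fixes \<rho> :: real
  assumes L1: "1 \<le> L" and La: "L \<le> Suc a" and r1: "\<rho> \<ge> 1"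
    and hr: "\<And>s. Suc a - L \<le> s \<Longrightarrow> real (m choose Suc s) \<le> \<rho> * real (m choose s)"
  shows "real L * real (\<Sum>j\<in>{1..k}. m choose (a + j)) \<le> real k * \<rho> ^ (L + k) * real (F m a)"
proof -
  have one: "real L * real (m choose (a + j)) \<le> \<rho> ^ (L + k) * real (F m a)" if j: "j \<in> {1..k}" for j
  proof -
    have "real (m choose (a + j)) \<le> \<rho> ^ (L + k) * real (m choose (a - i))" if i: "i < L" for i
    proof -
      have "real (m choose ((a - i) + (i + j))) \<le> \<rho> ^ (i + j) * real (m choose (a - i))"
        using i La by (intro ratio_pow[OF r1 hr]) auto
      also have "\<dots> \<le> \<rho> ^ (L + k) * real (m choose (a - i))"
        using i j r1 by (intro mult_right_mono power_increasing) auto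
      finally show ?thesis using i La by simp
    qed
    then have "(\<Sum>i<L. real (m choose (a + j))) \<le> (\<Sum>i<L. \<rho> ^ (L + k) * real (m choose (a - i)))"
      by (intro sum_mono) auto
    also have "\<dots> = \<rho> ^ (L + k) * real (\<Sum>i<L. m choose (a - i))" by (simp add: sum_distrib_left)
    also have "\<dots> \<le> \<rho> ^ (L + k) * real (F m a)"
    proof -
      have h: "real (\<Sum>i<L. m choose (a - i)) \<le> real (F m a)"
        using sum_rev_le_F[OF La, of m] by (simp only: of_nat_le_iff)
      show ?thesis using r1 by (intro mult_left_mono[OF h]) auto
    qed
    finally show ?thesis by simp
  qed
  have "real L * real (\<Sum>j\<in>{1..k}. m choose (a + j)) = (\<Sum>j\<in>{1..k}. real L * real (m choose (a + j)))"
    by (simp add: sum_distrib_left)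
  also have "\<dots> \<le> (\<Sum>j\<in>{1..k}. \<rho> ^ (L + k) * real (F m a))" by (intro sum_mono one)
  also have "\<dots> = real k * \<rho> ^ (L + k) * real (F m a)" by simp
  finally show ?thesis .
qed

lemma sum_ind_card:
  assumes "finite A"
  shows "(\<Sum>x\<in>A. if P x then 1 else 0) = card {x\<in>A. P x}"
  using sum.inter_filter[OF assms, of "\<lambda>_. 1::nat" P] by simp

lemma sum_ind_card_real:
  assumes "finite A"
  shows "(\<Sum>x\<in>A. if P x then 1 else 0) = real (card {x\<in>A. P x})"
  using sum.inter_filter[OF assms, of "\<lambda>_. 1::real" P] by simp

definition sdiff :: "nat set \<Rightarrow> nat set \<Rightarrow> nat set" where "sdiff x y = (x - y) \<union> (y - x)"

definition KK :: "nat \<Rightarrow> nat \<Rightarrow> nat set set" where "KK n k = {K. K \<subseteq> {..<n} \<and> card K = k}"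

definition w :: "nat \<Rightarrow> nat \<Rightarrow> nat set \<Rightarrow> nat set \<Rightarrow> nat" where
  "w n k x y = card {K\<in>KK n k. y \<inter> K = x \<inter> K}"

lemma KK_finite: "finite (KK n k)"
  unfolding KK_def by (rule finite_subset[of _ "Pow {..<n}"]) auto

lemma KK_card: "card (KK n k) = n choose k"
  unfolding KK_def using n_subsets[of "{..<n}" k] by simp

lemma KK_ne: "k \<le> n \<Longrightarrow> KK n k \<noteq> {}"
  using KK_card[of n k] by (auto simp: zero_less_binomial_iff)

lemma inner_pmf:
  assumes K: "K \<in> KK n k" and y: "y \<subseteq> {..<n}"
  shows "pmf (pmf_of_set (Pow ({..<n} - K)) \<bind> (\<lambda>R. return_pmf ((x \<inter> K) \<union> R))) y
     = (if y \<inter> K = x \<inter> K then 1 else 0) / 2 ^ (n - k)"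
proof -
  let ?P = "Pow ({..<n} - K)"
  have fin: "finite ?P" by simp
  have ne: "?P \<noteq> {}" by auto
  have Ksub: "K \<subseteq> {..<n}" and cK: "card K = k" using K by (auto simp: KK_def)
  have cP: "card ?P = 2 ^ (n - k)"
    using card_Pow[of "{..<n} - K"] Ksub cK by (simp add: card_Diff_subset finite_subset)
  have key: "(x \<inter> K \<union> R = y) \<longleftrightarrow> (y \<inter> K = x \<inter> K \<and> R = y - K)" if "R \<in> ?P" for R
    using that y by auto
  have "(\<Sum>R\<in>?P. pmf (return_pmf (x \<inter> K \<union> R)) y) = (\<Sum>R\<in>?P. if R = y - K then (if y \<inter> K = x \<inter> K then 1 else 0) else 0)"
    by (intro sum.cong refl) (auto simp: indicator_def key)
  also have "\<dots> = (if y \<inter> K = x \<inter> K then 1 else 0)"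
    using y by (subst sum.delta[OF fin]) auto
  finally show ?thesis
    by (subst pmf_bind_pmf_of_set[OF ne fin]) (simp add: cP)
qed

lemma pmf_T:
  assumes kn: "k \<le> n" and y: "y \<subseteq> {..<n}"
  shows "pmf (T n k x) y = real (w n k x y) / (real (n choose k) * 2 ^ (n - k))"
proof -
  have "pmf (T n k x) y = (\<Sum>K\<in>KK n k. (if y \<inter> K = x \<inter> K then 1 else 0) / 2 ^ (n - k)) / real (card (KK n k))"
    unfolding T_def KK_def[symmetric]
    by (subst pmf_bind_pmf_of_set[OF KK_ne[OF kn] KK_finite]) (intro arg_cong2[where f="(/)"] sum.cong refl inner_pmf y, auto)
  also have "\<dots> = real (w n k x y) / (real (n choose k) * 2 ^ (n - k))"
    by (simp add: sum_divide_distrib[symmetric] sum_ind_card_real[OF KK_finite] w_def KK_card)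
  finally show ?thesis .
qed

lemma w_formula:
  assumes x: "x \<subseteq> {..<n}" and y: "y \<subseteq> {..<n}"
  shows "w n k x y = (n - card (sdiff x y)) choose k"
proof -
  have "{K\<in>KK n k. y \<inter> K = x \<inter> K} = {K. K \<subseteq> {..<n} - sdiff x y \<and> card K = k}"
    by (auto simp: KK_def sdiff_def)
  moreover have "sdiff x y \<subseteq> {..<n}" using x y by (auto simp: sdiff_def)
  ultimately show ?thesis
    unfolding w_def by (simp add: n_subsets card_Diff_subset finite_subset)
qed

lemma sdiff_bij:
  assumes x: "x \<subseteq> {..<n}"
  shows "bij_betw (sdiff x) {y. y \<subseteq> {..<n} \<and> y \<inter> K = x \<inter> K \<and> card (sdiff x y) \<le> r}
            {S. S \<subseteq> {..<n} - K \<and> card S \<le> r}"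
proof (rule bij_betw_byWitness[where f'="sdiff x"])
  show "\<forall>a\<in>{y. y \<subseteq> {..<n} \<and> y \<inter> K = x \<inter> K \<and> card (sdiff x y) \<le> r}. sdiff x (sdiff x a) = a"
    by (auto simp: sdiff_def)
  show "\<forall>a\<in>{S. S \<subseteq> {..<n} - K \<and> card S \<le> r}. sdiff x (sdiff x a) = a"
    by (auto simp: sdiff_def)
  show "sdiff x ` {y. y \<subseteq> {..<n} \<and> y \<inter> K = x \<inter> K \<and> card (sdiff x y) \<le> r} \<subseteq> {S. S \<subseteq> {..<n} - K \<and> card S \<le> r}"
    using x by (auto simp: sdiff_def)
  have "sdiff x (sdiff x S) = S" for S by (auto simp: sdiff_def)
  then show "sdiff x ` {S. S \<subseteq> {..<n} - K \<and> card S \<le> r} \<subseteq> {y. y \<subseteq> {..<n} \<and> y \<inter> K = x \<inter> K \<and> card (sdiff x y) \<le> r}"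
    using x by (auto simp: sdiff_def)
qed

lemma card_B:
  assumes x: "x \<subseteq> {..<n}"
  shows "card {y. y \<subseteq> {..<n} \<and> card (sdiff x y) \<le> r} = F n r"
proof -
  have "card {y. y \<subseteq> {..<n} \<and> y \<inter> {} = x \<inter> {} \<and> card (sdiff x y) \<le> r} = card {S. S \<subseteq> {..<n} - {} \<and> card S \<le> r}"
    using sdiff_bij[OF x, of "{}" r] by (rule bij_betw_same_card)
  then show ?thesis using card_small_subsets[of "{..<n}" r] by simp
qed

lemma card_B_K:
  assumes x: "x \<subseteq> {..<n}" and K: "K \<in> KK n k"
  shows "card {y\<in>{y. y \<subseteq> {..<n} \<and> card (sdiff x y) \<le> r}. y \<inter> K = x \<inter> K} = F (n - k) r"
proof -
  have Ksub: "K \<subseteq> {..<n}" and cK: "card K = k" using K by (auto simp: KK_def)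
  have e: "{y\<in>{y. y \<subseteq> {..<n} \<and> card (sdiff x y) \<le> r}. y \<inter> K = x \<inter> K}
     = {y. y \<subseteq> {..<n} \<and> y \<inter> K = x \<inter> K \<and> card (sdiff x y) \<le> r}" by auto
  have "card {y. y \<subseteq> {..<n} \<and> y \<inter> K = x \<inter> K \<and> card (sdiff x y) \<le> r} = card {S. S \<subseteq> {..<n} - K \<and> card S \<le> r}"
    using sdiff_bij[OF x, of K r] by (rule bij_betw_same_card)
  also have "\<dots> = F (n - k) r"
    using card_small_subsets[of "{..<n} - K" r] Ksub cK by (simp add: card_Diff_subset finite_subset)
  finally show ?thesis using e by simp
qed

lemma sum_w_B:
  assumes x: "x \<subseteq> {..<n}"
  shows "(\<Sum>y\<in>{y. y \<subseteq> {..<n} \<and> card (sdiff x y) \<le> r}. w n k x y) = (n choose k) * F (n - k) r"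
proof -
  let ?B = "{y. y \<subseteq> {..<n} \<and> card (sdiff x y) \<le> r}"
  have fB: "finite ?B" by (rule finite_subset[of _ "Pow {..<n}"]) auto
  have "(\<Sum>y\<in>?B. w n k x y) = (\<Sum>y\<in>?B. \<Sum>K\<in>KK n k. if y \<inter> K = x \<inter> K then 1 else 0)"
    unfolding w_def by (simp add: sum_ind_card[OF KK_finite])
  also have "\<dots> = (\<Sum>K\<in>KK n k. \<Sum>y\<in>?B. if y \<inter> K = x \<inter> K then 1 else 0)"
    by (rule sum.swap)
  also have "\<dots> = (\<Sum>K\<in>KK n k. F (n - k) r)"
    by (intro sum.cong refl) (simp only: sum_ind_card[OF fB] card_B_K[OF x])
  also have "\<dots> = (n choose k) * F (n - k) r" by (simp add: KK_card)
  finally show ?thesis .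
qed

lemma exchange:
  fixes f :: "'a \<Rightarrow> nat"
  assumes fX: "finite X" and fB: "finite B" and c: "card X \<le> card B"
    and h1: "\<And>y. y \<in> X - B \<Longrightarrow> f y \<le> t" and h2: "\<And>y. y \<in> B - X \<Longrightarrow> t \<le> f y"
  shows "sum f X \<le> sum f B"
proof -
  have cX: "card X = card (X \<inter> B) + card (X - B)"
    using card_Diff_subset_Int[of X B] card_mono[OF fX, of "X \<inter> B"] fX by simp
  have cB: "card B = card (X \<inter> B) + card (B - X)"
    using card_Diff_subset_Int[of B X] card_mono[OF fB, of "B \<inter> X"] fB by (simp add: Int_commute)
  have cc: "card (X - B) \<le> card (B - X)" using c cX cB by linarith
  have sX: "sum f X = sum f (X \<inter> B) + sum f (X - B)" using fX by (metis sum.Int_Diff)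
  have sB: "sum f B = sum f (X \<inter> B) + sum f (B - X)" using fB by (metis Int_commute sum.Int_Diff)
  have "sum f (X - B) \<le> card (X - B) * t" using h1 sum_bounded_above[of "X - B" f t] by auto
  also have "\<dots> \<le> card (B - X) * t" using cc by simp
  also have "\<dots> \<le> sum f (B - X)" using h2 sum_bounded_below[of "B - X" t f] by auto
  finally show ?thesis using sX sB by simp
qed

lemma comb_bound:
  assumes kn: "k \<le> n" and x: "x \<subseteq> {..<n}" and X: "X \<subseteq> cube n" and cX: "card X \<le> F n r"
  shows "measure_pmf.prob (T n k x) X \<le> real (F (n - k) r) / 2 ^ (n - k)"
proof -
  let ?B = "{y. y \<subseteq> {..<n} \<and> card (sdiff x y) \<le> r}"
  let ?C = "real (n choose k) * 2 ^ (n - k)"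
  have fB: "finite ?B" by (rule finite_subset[of _ "Pow {..<n}"]) auto
  have fX: "finite X" using X unfolding cube_def by (rule finite_subset) auto
  have Cpos: "?C > 0" using kn by (simp add: zero_less_binomial_iff)
  have "measure_pmf.prob (T n k x) X = (\<Sum>y\<in>X. pmf (T n k x) y)"
    by (rule measure_measure_pmf_finite[OF fX])
  also have "\<dots> = (\<Sum>y\<in>X. real (w n k x y) / ?C)"
    using X by (intro sum.cong refl pmf_T[OF kn]) (auto simp: cube_def)
  also have "\<dots> = real (\<Sum>y\<in>X. w n k x y) / ?C"
    by (simp add: sum_divide_distrib)
  also have "\<dots> \<le> real (\<Sum>y\<in>?B. w n k x y) / ?C"
  proof -
    have "(\<Sum>y\<in>X. w n k x y) \<le> (\<Sum>y\<in>?B. w n k x y)"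
    proof (rule exchange[OF fX fB, where t = "(n - Suc r) choose k"])
      show "card X \<le> card ?B" using cX card_B[OF x, of r] by simp
      fix y assume y: "y \<in> X - ?B"
      then have ys: "y \<subseteq> {..<n}" using X by (auto simp: cube_def)
      with y have "card (sdiff x y) > r" by auto
      then show "w n k x y \<le> (n - Suc r) choose k"
        using w_formula[OF x ys] by (simp add: binomial_right_mono)
    next
      fix y assume y: "y \<in> ?B - X"
      then have ys: "y \<subseteq> {..<n}" and "card (sdiff x y) \<le> r" by auto
      then show "(n - Suc r) choose k \<le> w n k x y"
        using w_formula[OF x ys] by (simp add: binomial_right_mono)
    qed
    then have "real (\<Sum>y\<in>X. w n k x y) \<le> real (\<Sum>y\<in>?B. w n k x y)" by (simp only: of_nat_le_iff)
    then show ?thesis using Cpos by (intro divide_right_mono) auto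
  qed
  also have "\<dots> = real (F (n - k) r) / 2 ^ (n - k)"
    using Cpos kn by (simp add: sum_w_B[OF x])
  finally show ?thesis .
qed

lemma mu_ball: "mu n (ball_r n (int r)) = real (F n r) / 2 ^ n"
proof -
  have "ball_r n (int r) \<inter> cube n = {S. S \<subseteq> {..<n} \<and> card S \<le> r}"
    by (auto simp: ball_r_def cube_def)
  then show ?thesis unfolding mu_def using card_small_subsets[of "{..<n}" r] by simp
qed

lemma exp_half_le2: "exp (1/2::real) \<le> 2"
proof -
  have "exp (1/2::real) * exp (1/2) = exp 1" by (simp flip: exp_add)
  then have "exp (1/2::real) * exp (1/2) \<le> 2 * 2" using exp_le by simp
  show ?thesis
  proof (rule ccontr)
    assume "\<not> ?thesis"
    then have "(2::real) * 2 < exp (1/2) * exp (1/2)" by (intro mult_strict_mono) auto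
    with \<open>exp (1/2::real) * exp (1/2) \<le> 2 * 2\<close> show False by simp
  qed
qed

lemma pow_exp_bound:
  fixes d :: real
  assumes "d \<ge> 0" "real j * d \<le> 1/2"
  shows "(1 + d) ^ j \<le> 2"
proof -
  have "(1 + d) ^ j \<le> exp d ^ j" using assms by (intro power_mono) auto
  also have "\<dots> = exp (real j * d)" by (simp add: exp_of_nat_mult)
  also have "\<dots> \<le> exp (1/2)" using assms by simp
  also have "\<dots> \<le> 2" by (rule exp_half_le2)
  finally show ?thesis .
qed

lemma core:
  fixes n k N :: nat and p \<eta> :: real and r :: int
  assumes k1: "1 \<le> k" and N1: "1 \<le> N" and n3: "3 \<le> n"
    and hp: "\<bar>p\<bar> * (real k * real N) \<le> 1/64"
    and hk: "(real k * real N) ^ 2 \<le> real n / 96"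
    and hr: "real_of_int r > (1/2 - p) * real n"
    and eta: "\<eta> > 0" and etaN: "real N * \<eta> \<ge> 4"
    and x: "x \<in> cube n" and X: "X \<subseteq> cube n" and mX: "mu n X \<le> mu n (ball_r n r)"
  shows "measure_pmf.prob (T n k x) X < (1 + \<eta>) * mu n (ball_r n r)"
proof -
  define q where "q = real k * real N"
  have "1 * 1 \<le> k * N" using k1 N1 by (intro mult_le_mono) auto
  then have q1: "1 \<le> q" unfolding q_def by (metis of_nat_1 of_nat_le_iff of_nat_mult mult_1)
  have kq: "real k \<le> q" using k1 N1 q_def by (simp add: mult_le_cancel_left1)
  have qq: "q \<le> q ^ 2" using q1 by (simp add: power2_eq_square)
  have qn: "q * 96 \<le> real n" using hk qq unfolding q_def by linarith
  have np: "real n > 0" using n3 by simp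
  have pabs: "\<bar>p\<bar> \<le> 1/64"
  proof -
    have "\<bar>p\<bar> * 1 \<le> \<bar>p\<bar> * q" using q1 by (intro mult_left_mono) auto
    then show ?thesis using hp q_def by simp
  qed
  have pn: "p * real n \<le> \<bar>p\<bar> * real n" by (intro mult_right_mono) auto
  have pn2: "\<bar>p\<bar> * real n \<le> real n / 64" using pabs np by (simp add: mult_right_mono)
  have hr': "real_of_int r > real n / 2 - p * real n" using hr by (simp add: algebra_simps)
  have rpos: "r \<ge> 0" using hr' pn pn2 np by linarith
  obtain r0 where r0: "r = int r0" using rpos nonneg_eq_int by blast
  have r0r: "real r0 = real_of_int r" using r0 by simp
  have kn: "k \<le> n" using kq qn by linarith
  have r0big: "real k + q \<le> real r0" using r0r hr' pn pn2 kq qn by linarith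
  define m where "m = n - k"
  define a where "a = r0 - k"
  define L where "L = k * N"
  have Lq: "real L = q" by (simp add: L_def q_def)
  have ka: "k \<le> r0" using r0big q1 by linarith
  have ra: "real a = real r0 - real k" using ka by (simp add: a_def)
  have rm: "real m = real n - real k" using kn by (simp add: m_def)
  have La: "L \<le> Suc a" using r0big ra Lq by linarith
  have L1: "1 \<le> L" using Lq q1 by linarith
  define s0 where "s0 = Suc a - L"
  have rs0: "real s0 = real r0 - real k + 1 - q" using La ra Lq by (simp add: s0_def of_nat_diff)
  have s0n: "real s0 + 1 \<ge> real n / 4" using rs0 r0r hr' pn pn2 kq qn by linarith
  define d where "d = 8 * \<bar>p\<bar> + 12 * q / real n"
  have d0: "d \<ge> 0" using q1 np by (simp add: d_def)
  have nd: "real n / 4 * d = 2 * (\<bar>p\<bar> * real n) + 3 * q" using np by (simp add: d_def field_simps)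
  have sd: "real n / 4 * d \<le> (real s0 + 1) * d" using s0n d0 by (intro mult_right_mono) auto
  have ms0: "real (m - s0) \<le> (real s0 + 1) * (1 + d)"
  proof (cases "s0 \<le> m")
    case True
    then have "real (m - s0) = real m - real s0" by (simp add: of_nat_diff)
    moreover have "(real s0 + 1) * (1 + d) = real s0 + 1 + (real s0 + 1) * d" by (simp add: algebra_simps)
    ultimately show ?thesis using rm rs0 r0r hr' pn kq nd sd by linarith
  next
    case False
    then show ?thesis using d0 by simp
  qed
  define \<rho> where "\<rho> = max 1 (real (m - s0) / (real s0 + 1))"
  have \<rho>1: "\<rho> \<ge> 1" by (simp add: \<rho>_def)
  have \<rho>d: "\<rho> \<le> 1 + d"
  proof -
    have "real (m - s0) / (real s0 + 1) \<le> 1 + d" using ms0 by (simp add: divide_le_eq add_pos_nonneg mult.commute)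
    then show ?thesis using d0 by (simp add: \<rho>_def)
  qed
  have hrat: "real (m choose Suc s) \<le> \<rho> * real (m choose s)" if "Suc a - L \<le> s" for s
  proof -
    have "(m choose Suc s) * (s0 + 1) \<le> (m choose s) * (m - s0)" using that s0_def ratio_nat by simp
    then have "real ((m choose Suc s) * (s0 + 1)) \<le> real ((m choose s) * (m - s0))"
      by (simp only: of_nat_le_iff)
    then have "real (m choose Suc s) * (real s0 + 1) \<le> real (m choose s) * real (m - s0)"
      by (simp only: of_nat_mult of_nat_add of_nat_1)
    then have "real (m choose Suc s) \<le> real (m choose s) * real (m - s0) / (real s0 + 1)"
      by (simp add: le_divide_eq add_pos_nonneg)
    also have "\<dots> = (real (m - s0) / (real s0 + 1)) * real (m choose s)" by simp
    also have "\<dots> \<le> \<rho> * real (m choose s)" by (intro mult_right_mono) (auto simp: \<rho>_def)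
    finally show ?thesis .
  qed
  define U where "U = (\<Sum>j\<in>{1..k}. m choose (a + j))"
  have tl: "real L * real U \<le> real k * \<rho> ^ (L + k) * real (F m a)"
    unfolding U_def by (rule tail[OF L1 La \<rho>1 hrat])
  have pw: "\<rho> ^ (L + k) \<le> 2"
  proof -
    have "\<rho> ^ (L + k) \<le> (1 + d) ^ (L + k)" using \<rho>1 \<rho>d by (intro power_mono) auto
    also have "\<dots> \<le> 2"
    proof (rule pow_exp_bound[OF d0])
      have e: "2 * q * d = 16 * (\<bar>p\<bar> * q) + 24 * (q ^ 2 / real n)"
        using np by (simp add: d_def field_simps power2_eq_square)
      have "q ^ 2 / real n \<le> (real n / 96) / real n" using hk np q_def by (intro divide_right_mono) auto
      then have "q ^ 2 / real n \<le> 1 / 96" using np by simp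
      have hpq: "\<bar>p\<bar> * q \<le> 1/64" using hp by (simp add: q_def)
      then have "2 * q * d \<le> 1/2" using e \<open>q ^ 2 / real n \<le> 1 / 96\<close> by linarith
      moreover have "real (L + k) * d \<le> 2 * q * d" using Lq kq d0 by (intro mult_right_mono) auto
      ultimately show "real (L + k) * d \<le> 1/2" by linarith
    qed
    finally show ?thesis .
  qed
  have Fa0: "real (F m a) \<ge> 0" by simp
  have "real k * (real N * real U) = real L * real U" by (simp add: L_def)
  also have "\<dots> \<le> real k * (\<rho> ^ (L + k) * real (F m a))" using tl by simp
  finally have "real N * real U \<le> \<rho> ^ (L + k) * real (F m a)" using k1 by simp
  also have "\<dots> \<le> 2 * real (F m a)" using pw by (intro mult_right_mono) auto
  finally have NU: "real N * real U \<le> 2 * real (F m a)" .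
  have "4 * real U \<le> real N * \<eta> * real U" using etaN by (intro mult_right_mono) auto
  also have "\<dots> = \<eta> * (real N * real U)" by simp
  also have "\<dots> \<le> \<eta> * (2 * real (F m a))" using NU eta by (intro mult_left_mono) auto
  finally have Ub: "real U \<le> \<eta> / 2 * real (F m a)" by simp
  have Fr0: "F m r0 = F m a + U" using F_add[of m a k] ka by (simp add: a_def U_def)
  have dbl: "2 ^ k * F m a \<le> F n r0" using F_double[of k m a] ka kn by (simp add: a_def m_def)
  have Fn1: "real (F n r0) \<ge> 1" using F_pos[of n r0] by simp
  have cX: "card X \<le> F n r0"
  proof -
    have "X \<inter> cube n = X" using X by auto
    then have "real (card X) / 2 ^ n \<le> real (F n r0) / 2 ^ n"
      using mX mu_ball[of n r0] r0 by (simp add: mu_def)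
    then have "real (card X) \<le> real (F n r0)" by (simp add: divide_le_cancel)
    then show ?thesis by (simp only: of_nat_le_iff)
  qed
  have "measure_pmf.prob (T n k x) X \<le> real (F m r0) / 2 ^ m"
    using comb_bound[OF kn _ X cX] x by (simp add: cube_def m_def)
  also have "\<dots> \<le> (1 + \<eta> / 2) * real (F m a) / 2 ^ m"
    using Fr0 Ub by (intro divide_right_mono) (auto simp: algebra_simps)
  also have "\<dots> = (1 + \<eta> / 2) * (2 ^ k * real (F m a)) / 2 ^ n"
    using kn by (simp add: m_def power_diff)
  also have "\<dots> \<le> (1 + \<eta> / 2) * real (F n r0) / 2 ^ n"
  proof -
    have "real (2 ^ k * F m a) \<le> real (F n r0)" using dbl by (simp only: of_nat_le_iff)
    then have "2 ^ k * real (F m a) \<le> real (F n r0)" by simp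
    then show ?thesis using eta by (intro divide_right_mono mult_left_mono) auto
  qed
  also have "\<dots> < (1 + \<eta>) * real (F n r0) / 2 ^ n"
    using eta Fn1 by (intro divide_strict_right_mono mult_strict_right_mono) auto
  also have "\<dots> = (1 + \<eta>) * mu n (ball_r n r)" using mu_ball[of n r0] r0 by simp
  finally show ?thesis .
qed

lemma asym: fixes c :: real and N :: nat shows "eventually (\<lambda>n::nat. (c * ln (real n) * real N) ^ 2 \<le> real n / 96) sequentially"
proof -
  have t: "((\<lambda>x::real. (ln x) ^ 2 / x) \<longlongrightarrow> 0) at_top" by real_asymp
  have t2: "((\<lambda>n::nat. (ln (real n)) ^ 2 / real n) \<longlongrightarrow> 0) sequentially"
    using filterlim_compose[OF t filterlim_real_sequentially] by (simp add: o_def)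
  define A where "A = (c * real N) ^ 2"
  have A0: "A \<ge> 0" by (simp add: A_def)
  define e where "e = 1 / (96 * A + 1)"
  have e0: "e > 0" using A0 by (simp add: e_def)
  have Ae: "A * e \<le> 1 / 96" using A0 by (simp add: e_def field_simps)
  have ev: "eventually (\<lambda>n::nat. (ln (real n)) ^ 2 / real n < e) sequentially"
    using order_tendstoD(2)[OF t2 e0] .
  show ?thesis
    using ev eventually_gt_at_top[of 0]
  proof eventually_elim
    case (elim n)
    then have np: "real n > 0" by simp
    have l: "(ln (real n)) ^ 2 \<le> e * real n" using elim np by (simp add: divide_less_eq less_imp_le)
    have "(c * ln (real n) * real N) ^ 2 = A * (ln (real n)) ^ 2" by (simp add: A_def power_mult_distrib)
    also have "\<dots> \<le> A * (e * real n)" using l A0 by (intro mult_left_mono)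
    also have "\<dots> = (A * e) * real n" by simp
    also have "\<dots> \<le> 1 / 96 * real n" using Ae np by (intro mult_right_mono) auto
    finally show ?case by simp
  qed
qed

theorem claimE:
  fixes k :: "nat \<Rightarrow> nat" and \<phi> :: "nat \<Rightarrow> real"
  assumes "\<And>n. 1 \<le> k n"
    and "(\<lambda>n. real (k n)) \<in> O(\<lambda>n. ln (real n))"
    and "\<phi> \<in> o(\<lambda>n. 1 / real (k n))"
  shows "\<forall>\<eta>>0. \<exists>n0. \<forall>n\<ge>n0. \<forall>r::int. real_of_int r > (1/2 - \<phi> n) * real n \<longrightarrow>
           (\<forall>x\<in>cube n. \<forall>X\<subseteq>cube n. mu n X \<le> mu n (ball_r n r) \<longrightarrow>
              measure_pmf.prob (T n (k n) x) X < (1 + \<eta>) * mu n (ball_r n r))"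
proof (intro allI impI)
  fix \<eta> :: real assume eta: "\<eta> > 0"
  define N where "N = nat \<lceil>4 / \<eta>\<rceil>"
  have N4: "real N \<ge> 4 / \<eta>" unfolding N_def by linarith
  have "4 / \<eta> > 0" using eta by simp
  then have "real N > 0" using N4 by linarith
  then have N1: "1 \<le> N" by simp
  have etaN: "real N * \<eta> \<ge> 4" using N4 eta by (simp add: field_simps)
  obtain c where c: "c > 0" "eventually (\<lambda>n. norm (real (k n)) \<le> c * norm (ln (real n))) sequentially"
    using landau_o.bigE[OF assms(2)] by blast
  have cphi: "1 / (64 * real N) > 0" using N1 by simp
  have ph: "eventually (\<lambda>n. norm (\<phi> n) \<le> 1 / (64 * real N) * norm (1 / real (k n))) sequentially"
    using landau_o.smallD[OF assms(3) cphi] .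
  have ev: "eventually (\<lambda>n. norm (real (k n)) \<le> c * norm (ln (real n))
      \<and> norm (\<phi> n) \<le> 1 / (64 * real N) * norm (1 / real (k n))
      \<and> (c * ln (real n) * real N) ^ 2 \<le> real n / 96 \<and> n \<ge> 3) sequentially"
    by (intro eventually_conj c(2) ph asym eventually_ge_at_top)
  then obtain n0 where n0: "\<And>n. n \<ge> n0 \<Longrightarrow> norm (real (k n)) \<le> c * norm (ln (real n))
      \<and> norm (\<phi> n) \<le> 1 / (64 * real N) * norm (1 / real (k n))
      \<and> (c * ln (real n) * real N) ^ 2 \<le> real n / 96 \<and> n \<ge> 3"
    unfolding eventually_sequentially by blast
  show "\<exists>n0. \<forall>n\<ge>n0. \<forall>r::int. real_of_int r > (1/2 - \<phi> n) * real n \<longrightarrow>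
           (\<forall>x\<in>cube n. \<forall>X\<subseteq>cube n. mu n X \<le> mu n (ball_r n r) \<longrightarrow>
              measure_pmf.prob (T n (k n) x) X < (1 + \<eta>) * mu n (ball_r n r))"
  proof (intro exI allI impI ballI)
    fix n r x X
    assume nn: "n0 \<le> n" and hr: "real_of_int r > (1/2 - \<phi> n) * real n"
      and x: "x \<in> cube n" and X: "X \<subseteq> cube n" and mX: "mu n X \<le> mu n (ball_r n r)"
    have h1: "real (k n) \<le> c * norm (ln (real n))"
      and h2: "norm (\<phi> n) \<le> 1 / (64 * real N) * norm (1 / real (k n))"
      and h3: "(c * ln (real n) * real N) ^ 2 \<le> real n / 96" and n3: "n \<ge> 3"
      using n0[OF nn] by auto
    have kpos: "real (k n) \<ge> 1" using assms(1)[of n] by simp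
    have lnpos: "ln (real n) \<ge> 0" using n3 by simp
    have h1': "real (k n) * real N \<le> c * ln (real n) * real N"
      using h1 lnpos by (intro mult_right_mono) auto
    have hk: "(real (k n) * real N) ^ 2 \<le> real n / 96"
    proof -
      have "(real (k n) * real N) ^ 2 \<le> (c * ln (real n) * real N) ^ 2"
        using h1' kpos by (intro power_mono) auto
      then show ?thesis using h3 by linarith
    qed
    have hp: "\<bar>\<phi> n\<bar> * (real (k n) * real N) \<le> 1/64"
    proof -
      have "\<bar>\<phi> n\<bar> * (real (k n) * real N) \<le> (1 / (64 * real N) * (1 / real (k n))) * (real (k n) * real N)"
        using h2 kpos by (intro mult_right_mono) auto
      also have "\<dots> = 1/64" using kpos N1 by (simp add: field_simps)
      finally show ?thesis .
    qed
    show "measure_pmf.prob (T n (k n) x) X < (1 + \<eta>) * mu n (ball_r n r)"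
      by (rule core[OF assms(1) N1 n3 hp hk hr eta etaN x X mX])
  qed
qed

end
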